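(* Let $(\varepsilon_i)_{i\ge0}$ and $(\varepsilon'_i)_{i\ge0}$ belong to $\mathcal{D}^\infty$. Then $$\Big|\sum_{i=0}^{\infty}(\varepsilon_i-\varepsilon'_i)\beta_2^i\Big|\le\frac{1}{1+\beta_2},\qquad \Big|\sum_{i=0}^{\infty}(\varepsilon_i-\varepsilon'_i)\beta_3^i\Big|\le\frac{C}{1-|\beta_3|^6},$$ where $C=\max\{|\sum_{i=0}^5(c_i-d_i)\beta_3^i| : (c_i)_{0\le i\le5},(d_i)_{0\le i\le5}\in\mathcal{D}\}$.
   Context: Let $P(x)=x^4-x^3-x^2-x-1$. Its roots are $\beta_1\approx 1.9275$, a real root $\beta_2\approx-0.7748$, and a pair of complex conjugate roots $\beta_3\approx-0.0763+0.8147i$ and $\overline{\beta_3}$. $\mathcal{D}$ denotes the set of finite $0/1$ words containing no four consecutive $1$'s, and $\mathcal{D}^\infty$ the set of sequences $(\varepsilon_i)_{i\ge l}$, $l\in\mathbb{Z}$, with $\varepsilon_i\in\{0,1\}$ and containing no four consecutive $1$'s. *)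

theory Defs
  imports "HOL-Analysis.Analysis" "HOL-Computational_Algebra.Polynomial"
begin

definition P :: "'a::comm_ring_1 poly" where
  "P = [:-1, -1, -1, -1, 1:]"

text \<open>beta2: the (unique) negative real root of P, approx -0.7748.\<close>
definition beta2 :: real where
  "beta2 = (THE x. poly P x = 0 \<and> x < 0)"

text \<open>beta3: the (unique) complex root of P with positive imaginary part, approx -0.0763+0.8147i.\<close>
definition beta3 :: complex where
  "beta3 = (THE z. poly P z = 0 \<and> Im z > 0)"

definition inD :: "nat list \<Rightarrow> bool" where
  "inD w \<longleftrightarrow> set w \<subseteq> {0, 1} \<and>
     (\<forall>i. i + 3 < length w \<longrightarrow>
        \<not> (w ! i = 1 \<and> w ! (i+1) = 1 \<and> w ! (i+2) = 1 \<and> w ! (i+3) = 1))"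

definition inDinf :: "(nat \<Rightarrow> nat) \<Rightarrow> bool" where
  "inDinf e \<longleftrightarrow> (\<forall>i. e i \<in> {0, 1}) \<and>
     (\<forall>i. \<not> (e i = 1 \<and> e (i+1) = 1 \<and> e (i+2) = 1 \<and> e (i+3) = 1))"

definition C_const :: real where
  "C_const = Max {cmod (\<Sum>i<6. (of_nat (c ! i) - of_nat (d ! i)) * beta3 ^ i) | c d.
                   length c = 6 \<and> length d = 6 \<and> inD c \<and> inD d}"

end

theory Submission
  imports Defs
begin

lemma polyP: "poly P (x::'a::comm_ring_1) = x^4 - x^3 - x^2 - x - 1"
  by (simp add: P_def algebra_simps power_numeral_reduce)

lemma factorP:
  fixes a b z :: "'a::field"
  assumes ha: "poly P a = 0" and hb: "poly P b = 0" and ab: "a \<noteq> b"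
  defines "p \<equiv> a + b - 1" and "q \<equiv> (a+b)*(a+b-1) - a*b - 1"
  shows "poly P z = (z-a)*(z-b)*(z^2 + p*z + q)" and "a*b*q = -1"
proof -
  define s m where "s = a+b" and "m = a*b"
  define \<alpha> \<beta> where "\<alpha> = -1 + s*q - m*p" and "\<beta> = -1 - m*q"
  have D: "\<And>w. poly P w - (w-a)*(w-b)*(w^2 + p*w + q) = \<alpha>*w + \<beta>"
    unfolding polyP \<alpha>_def \<beta>_def s_def m_def p_def q_def
    by (simp add: algebra_simps power2_eq_square power3_eq_cube power4_eq_xxxx)
  have 1: "\<alpha>*a + \<beta> = 0" using D[of a] ha by simp
  have 2: "\<alpha>*b + \<beta> = 0" using D[of b] hb by simp
  have "\<alpha>*(a-b) = (\<alpha>*a+\<beta>) - (\<alpha>*b+\<beta>)" by (simp add: algebra_simps)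
  hence "\<alpha>*(a-b) = 0" using 1 2 by simp
  hence a0: "\<alpha> = 0" using ab by simp
  hence b0: "\<beta> = 0" using 1 by simp
  show "poly P z = (z-a)*(z-b)*(z^2 + p*z + q)" using D[of z] a0 b0 by simp
  show "a*b*q = -1" using b0 unfolding \<beta>_def m_def by (simp add: algebra_simps)
qed

lemma roots: obtains a b :: real where "poly P a = 0" "1.92 \<le> a" "a \<le> 1.93"
   "poly P b = 0" "-0.78 \<le> b" "b \<le> -0.77"
proof -
  have c: "continuous_on S (\<lambda>x::real. poly P x)" for S by (intro continuous_intros)
  have "\<exists>x\<ge>1.92. x \<le> 1.93 \<and> poly P x = (0::real)"
    by (rule IVT'[OF _ _ _ c]) (simp_all add: polyP power_numeral_reduce)
  then obtain a where "poly P a = (0::real)" "1.92 \<le> a" "a \<le> 1.93" by auto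
  moreover have "\<exists>x\<ge>-0.78. x \<le> -0.77 \<and> poly P x = (0::real)"
    by (rule IVT2'[OF _ _ _ c]) (simp_all add: polyP power_numeral_reduce)
  then obtain b where "poly P b = (0::real)" "-0.78 \<le> b" "b \<le> -0.77" by auto
  ultimately show ?thesis using that by blast
qed

lemma beta_facts: "-0.78 \<le> beta2 \<and> beta2 \<le> -0.77 \<and> cmod beta3 < 1"
proof -
  obtain a b :: real where ha: "poly P a = 0" "1.92 \<le> a" "a \<le> 1.93"
   and hb: "poly P b = 0" "-0.78 \<le> b" "b \<le> -0.77" by (rule roots)
  define p where "p = a + b - 1"
  define q where "q = (a+b)*(a+b-1) - a*b - 1"
  have ab: "a \<noteq> b" using ha hb by simp
  have fr: "poly P z = (z-a)*(z-b)*(z^2 + p*z + q)" for z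
    using factorP(1)[OF ha(1) hb(1) ab] unfolding p_def q_def .
  have abq: "a*b*q = -1" using factorP(2)[OF ha(1) hb(1) ab] unfolding q_def .
  have p1: "0.14 \<le> p" "p \<le> 0.16" using ha hb by (simp_all add: p_def)
  have m1: "a*b \<le> -1.4784"
  proof -
    have "a*b \<le> 1.92*b" using ha hb mult_right_mono_neg[of "1.92" a b] by auto
    moreover have "1.92*b \<le> -1.4784" using hb by simp
    ultimately show ?thesis by linarith
  qed
  have m2: "-1.5054 \<le> a*b"
  proof -
    have "a*b \<ge> a*(-0.78)" using ha hb by (intro mult_left_mono) auto
    moreover have "a*(-0.78) \<ge> 1.93 * (-0.78)" using ha by simp
    ultimately show ?thesis by simp
  qed
  have abn: "a*b \<noteq> 0" using m1 by auto
  have qe: "q = -1/(a*b)" using abq abn by (simp add: field_simps)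
  have q1: "q < 1" using m1 unfolding qe by (simp add: field_simps)
  have q2: "q \<ge> 0.66" using m1 m2 unfolding qe by (simp add: field_simps)
  have pp: "p^2 \<le> 0.16^2" using p1 by (intro power_mono) auto
  define d where "d = q - p^2/4"
  have d0: "d > 0" using q2 pp by (simp add: d_def power2_eq_square)
  have quad_pos: "y^2 + p*y + q > 0" for y :: real
  proof -
    have "y^2 + p*y + q = (y + p/2)^2 + d" by (simp add: d_def power2_eq_square algebra_simps)
    thus ?thesis using d0 by (smt (verit) zero_le_power2)
  qed
  have b2: "beta2 = b"
    unfolding beta2_def
  proof (rule the_equality)
    show "poly P b = 0 \<and> b < 0" using hb by simp
    fix y :: real assume "poly P y = 0 \<and> y < 0"
    hence "(y-a)*(y-b)*(y^2 + p*y + q) = 0" "y < 0" using fr[of y] by auto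
    thus "y = b" using quad_pos[of y] ha by auto
  qed
  define z0 where "z0 = Complex (-p/2) (sqrt d)"
  have frc: "poly P z = (z-of_real a)*(z-of_real b)*(z^2 + of_real p*z + of_real q)" for z :: complex
  proof -
    have "poly P (of_real a :: complex) = of_real (poly P a)" by (simp add: polyP)
    hence A: "poly P (of_real a :: complex) = 0" using ha by simp
    have "poly P (of_real b :: complex) = of_real (poly P b)" by (simp add: polyP)
    hence B: "poly P (of_real b :: complex) = 0" using hb by simp
    show ?thesis using factorP(1)[OF A B, of z] ab unfolding p_def q_def by simp
  qed
  have sd: "sqrt d ^ 2 = d" using d0 by simp
  have z0r: "poly P z0 = 0"
  proof -
    have "z0^2 + of_real p*z0 + of_real q = 0"
      using sd unfolding z0_def d_def by (simp add: complex_eq_iff power2_eq_square algebra_simps)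
    thus ?thesis using frc[of z0] by simp
  qed
  have b3: "beta3 = z0"
    unfolding beta3_def
  proof (rule the_equality)
    show "poly P z0 = 0 \<and> Im z0 > 0" using z0r d0 by (simp add: z0_def)
    fix z assume h: "poly P z = 0 \<and> Im z > 0"
    hence "z \<noteq> of_real a" "z \<noteq> of_real b" by auto
    hence e: "z^2 + of_real p*z + of_real q = 0" using h frc[of z] by simp
    obtain x y where z: "z = Complex x y" by (cases z)
    have y0: "y > 0" using h z by simp
    have "Im (z^2 + of_real p*z + of_real q) = 0" using e by simp
    hence "y*(2*x + p) = 0" unfolding z by (simp add: power2_eq_square algebra_simps)
    hence xe: "x = -p/2" using y0 by simp
    have "Re (z^2 + of_real p*z + of_real q) = 0" using e by simp
    hence "y^2 = d" unfolding z d_def xe by (simp add: power2_eq_square algebra_simps)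
    hence "y = sqrt d" using y0 by (metis abs_of_pos real_sqrt_abs)
    thus "z = z0" using z xe z0_def by simp
  qed
  have "cmod z0 = sqrt q" using d0 unfolding z0_def cmod_def d_def by (simp add: power2_eq_square)
  hence "cmod beta3 < 1" using q1 b3 q2 by simp
  thus ?thesis using b2 hb by simp
qed

lemma C_ge:
  assumes "length c = 6" "length d = 6" "inD c" "inD d"
  shows "cmod (\<Sum>i<6. (of_nat (c ! i) - of_nat (d ! i)) * beta3 ^ i) \<le> C_const"
proof -
  let ?F = "\<lambda>c d. cmod (\<Sum>i<6. (of_nat (c ! i) - of_nat (d ! i)) * beta3 ^ i)"
  let ?L = "{c::nat list. set c \<subseteq> {0,1} \<and> length c = 6}"
  have fL: "finite ?L" by (rule finite_lists_length_eq) simp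
  have sub: "{?F c d | c d. length c = 6 \<and> length d = 6 \<and> inD c \<and> inD d}
      \<subseteq> (\<lambda>(c,d). ?F c d) ` (?L \<times> ?L)"
    by (auto simp: inD_def)
  have fin: "finite {?F c d | c d. length c = 6 \<and> length d = 6 \<and> inD c \<and> inD d}"
    by (rule finite_subset[OF sub]) (use fL in auto)
  show ?thesis unfolding C_const_def
    by (rule Max_ge[OF fin]) (use assms in blast)
qed

lemma block_inD:
  assumes "inDinf e"
  shows "inD (map (\<lambda>j. e (k*6+j)) [0..<6])"
proof -
  have e01: "\<forall>i. e i \<in> {0,1}" and n: "\<forall>i. \<not> (e i = 1 \<and> e (i+1) = 1 \<and> e (i+2) = 1 \<and> e (i+3) = 1)"
    using assms unfolding inDinf_def by blast+
  show ?thesis unfolding inD_def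
  proof
    show "set (map (\<lambda>j. e (k*6+j)) [0..<6]) \<subseteq> {0,1}"
    proof
      fix x assume "x \<in> set (map (\<lambda>j. e (k*6+j)) [0..<6])"
      then obtain j where "x = e (k*6+j)" by auto
      thus "x \<in> {0,1}" using e01 by (metis)
    qed
    show "\<forall>i. i + 3 < length (map (\<lambda>j. e (k*6+j)) [0..<6]) \<longrightarrow>
        \<not> (map (\<lambda>j. e (k*6+j)) [0..<6] ! i = 1 \<and> map (\<lambda>j. e (k*6+j)) [0..<6] ! (i+1) = 1 \<and>
           map (\<lambda>j. e (k*6+j)) [0..<6] ! (i+2) = 1 \<and> map (\<lambda>j. e (k*6+j)) [0..<6] ! (i+3) = 1)"
    proof (intro allI impI)
      fix i assume "i + 3 < length (map (\<lambda>j. e (k*6+j)) [0..<6])"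
      hence i: "i + 3 < 6" by simp
      have "\<not> (e (k*6+i) = 1 \<and> e (k*6+i+1) = 1 \<and> e (k*6+i+2) = 1 \<and> e (k*6+i+3) = 1)"
        using n by blast
      thus "\<not> (map (\<lambda>j. e (k*6+j)) [0..<6] ! i = 1 \<and> map (\<lambda>j. e (k*6+j)) [0..<6] ! (i+1) = 1 \<and>
           map (\<lambda>j. e (k*6+j)) [0..<6] ! (i+2) = 1 \<and> map (\<lambda>j. e (k*6+j)) [0..<6] ! (i+3) = 1)"
        using i by (simp add: add.assoc)
    qed
  qed
qed

theorem lemma3p2:
  fixes e e' :: "nat \<Rightarrow> nat"
  assumes "inDinf e" and "inDinf e'"
  shows "\<bar>\<Sum>i. (real (e i) - real (e' i)) * beta2 ^ i\<bar> \<le> 1 / (1 + beta2) \<and>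
         cmod (\<Sum>i. (of_nat (e i) - of_nat (e' i)) * beta3 ^ i) \<le> C_const / (1 - cmod beta3 ^ 6)"
proof
  have e01: "e i \<in> {0,1}" "e' i \<in> {0,1}" for i using assms by (auto simp: inDinf_def)
  have b2: "-0.78 \<le> beta2" "beta2 \<le> -0.77" and b3: "cmod beta3 < 1" using beta_facts by auto
  define f where "f i = (real (e i) - real (e' i)) * beta2 ^ i" for i
  have fn: "norm (f i) \<le> \<bar>beta2\<bar> ^ i" for i
  proof -
    have "\<bar>real (e i) - real (e' i)\<bar> \<le> 1" using e01[of i] by auto
    thus ?thesis unfolding f_def by (simp add: abs_mult power_abs mult_left_le_one_le)
  qed
  have gs: "summable (\<lambda>i. \<bar>beta2\<bar> ^ i)" using b2 by (intro summable_geometric) simp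
  have fs: "summable (\<lambda>i. norm (f i))"
    by (rule summable_comparison_test[OF _ gs]) (use fn in simp)
  have "\<bar>suminf f\<bar> \<le> (\<Sum>i. norm (f i))" using summable_norm[OF fs] by simp
  also have "\<dots> \<le> (\<Sum>i. \<bar>beta2\<bar> ^ i)" by (rule suminf_le[OF fn fs gs])
  also have "\<dots> = 1 / (1 - \<bar>beta2\<bar>)" using b2 by (intro suminf_geometric) simp
  also have "\<dots> = 1 / (1 + beta2)" using b2 by simp
  finally show "\<bar>\<Sum>i. (real (e i) - real (e' i)) * beta2 ^ i\<bar> \<le> 1 / (1 + beta2)"
    unfolding f_def .
next
  have e01: "e i \<in> {0,1}" "e' i \<in> {0,1}" for i using assms by (auto simp: inDinf_def)
  have b3: "cmod beta3 < 1" using beta_facts by auto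
  define g :: "nat \<Rightarrow> complex" where "g i = (of_nat (e i) - of_nat (e' i)) * beta3 ^ i" for i
  have gn: "norm (g i) \<le> cmod beta3 ^ i" for i
  proof -
    have "cmod (of_nat (e i) - of_nat (e' i)) \<le> 1" using e01[of i] by auto
    thus ?thesis unfolding g_def by (simp add: norm_mult norm_power mult_left_le_one_le)
  qed
  have gs: "summable (\<lambda>i. cmod beta3 ^ i)" using b3 by (intro summable_geometric) simp
  have gns: "summable (\<lambda>i. norm (g i))"
    by (rule summable_comparison_test[OF _ gs]) (use gn in simp)
  have "g sums suminf g" using summable_norm_cancel[OF gns] by (simp add: summable_sums)
  then have hsum: "(\<lambda>k. sum g {k*6..<k*6+6}) sums suminf g" by (rule sums_group) simp
  define r where "r = cmod beta3 ^ 6"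
  have r0: "0 \<le> r" "r < 1" using b3 unfolding r_def by (auto simp: power_less_one_iff)
  have hn: "norm (sum g {k*6..<k*6+6}) \<le> C_const * r ^ k" for k
  proof -
    let ?c = "map (\<lambda>j. e (k*6+j)) [0..<6]" and ?d = "map (\<lambda>j. e' (k*6+j)) [0..<6]"
    have "sum g {k*6..<k*6+6} = (\<Sum>j<6. g (k*6+j))"
      by (simp add: sum.shift_bounds_nat_ivl[of g 0 "k*6" 6, simplified] lessThan_atLeast0 add.commute)
    also have "\<dots> = beta3 ^ (k*6) * (\<Sum>i<6. (of_nat (?c ! i) - of_nat (?d ! i)) * beta3 ^ i)"
      unfolding sum_distrib_left
      by (rule sum.cong) (auto simp: g_def power_add)
    moreover have pw: "(cmod beta3 ^ k)^6 = (cmod beta3^6)^k"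
      by (simp add: power_mult[symmetric] mult.commute)
    ultimately have "norm (sum g {k*6..<k*6+6}) =
        r ^ k * cmod (\<Sum>i<6. (of_nat (?c ! i) - of_nat (?d ! i)) * beta3 ^ i)"
      by (simp add: norm_mult norm_power r_def power_mult mult.commute pw)
    also have "\<dots> \<le> r ^ k * C_const"
      by (intro mult_left_mono C_ge block_inD assms) (use r0 in auto)
    finally show ?thesis by (simp add: mult.commute)
  qed
  have cs: "summable (\<lambda>k. C_const * r ^ k)" using r0 by (intro summable_mult summable_geometric) simp
  have hns: "summable (\<lambda>k. norm (sum g {k*6..<k*6+6}))"
    by (rule summable_comparison_test[OF _ cs]) (use hn in simp)
  have "cmod (suminf g) = cmod (\<Sum>k. sum g {k*6..<k*6+6})" using hsum sums_unique by metis
  also have "\<dots> \<le> (\<Sum>k. norm (sum g {k*6..<k*6+6}))" by (rule summable_norm[OF hns])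
  also have "\<dots> \<le> (\<Sum>k. C_const * r ^ k)" by (rule suminf_le[OF hn hns cs])
  also have "\<dots> = C_const * (1 / (1 - r))" using r0 by (simp add: suminf_mult suminf_geometric)
  finally show "cmod (\<Sum>i. (of_nat (e i) - of_nat (e' i)) * beta3 ^ i) \<le> C_const / (1 - cmod beta3 ^ 6)"
    unfolding g_def r_def by simp
qed

end
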